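(* Let $r\ge1$ be an integer and $\lambda\in\mathbb R$. Define $u_0(\lambda)=1$, $v_0(\lambda)=\min(2,\lambda)$, and for $1\le i\le r$ set $(u_i(\lambda),v_i(\lambda))=G_i(u_{i-1}(\lambda),v_{i-1}(\lambda))$, where $$G_i(a,b)=\big(1+\min(a,b),\ 1-2^{-i}+\max(a,b)\big).$$ Further set $z_0(\lambda)=1$, $h_0(\lambda)=2$, and for $1\le i\le r$ set $z_i(\lambda)=1+u_{i-1}(\lambda)$, $z_i'(\lambda)=1+v_{i-1}(\lambda)$, $h_i(\lambda)=v_i(\lambda)$. Then the point $(u(\lambda),v(\lambda),z(\lambda),z'(\lambda),h(\lambda))$ is the tropical barycenter (coordinatewise greatest element) of the $\lambda$-sublevel set of the tropical system $\mathrm{TropLP}_r$ described in the context.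
   Context: $\mathrm{TropLP}_r$ has variables $u_i,v_i,z_i,h_i\in\mathbb R\cup\{-\infty\}$ for $0\le i\le r$ and $z'_i$ for $1\le i\le r$. Its constraints are: - $\max(u_0,z_0)=1$ and $\max(v_0,h_0)=2$; - for $1\le i\le r$: $\max(u_i,z_i)=1+u_{i-1}$, $\max(u_i,z'_i)=1+v_{i-1}$, and $\max(v_i,h_i)=1-2^{-i}+\max(u_{i-1},v_{i-1})$. Its $\lambda$-sublevel set is the set of feasible points of these constraints that additionally satisfy $v_0\le\lambda$. *)

theory Defs
  imports Complex_Main "HOL-Library.Extended_Real"
begin

text \<open>Tropical values live in R \<union> {-\<infinity>}: we use ereal and exclude +\<infinity>.
A point of TropLP_r is a tuple (u, v, z, z', h) of functions nat \<Rightarrow> ereal;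
only indices 0..r (resp. 1..r for z') are meaningful.\<close>

type_synonym trop_point =
  "(nat \<Rightarrow> ereal) \<times> (nat \<Rightarrow> ereal) \<times> (nat \<Rightarrow> ereal) \<times> (nat \<Rightarrow> ereal) \<times> (nat \<Rightarrow> ereal)"

definition TropLP_feasible :: "nat \<Rightarrow> trop_point \<Rightarrow> bool" where
  "TropLP_feasible r p = (case p of (u, v, z, z', h) \<Rightarrow>
     (\<forall>i\<le>r. u i \<noteq> \<infinity> \<and> v i \<noteq> \<infinity> \<and> z i \<noteq> \<infinity> \<and> h i \<noteq> \<infinity>) \<and>
     (\<forall>i\<in>{1..r}. z' i \<noteq> \<infinity>) \<and>
     max (u 0) (z 0) = 1 \<and> max (v 0) (h 0) = 2 \<and>
     (\<forall>i\<in>{1..r}.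
        max (u i) (z i) = 1 + u (i - 1) \<and>
        max (u i) (z' i) = 1 + v (i - 1) \<and>
        max (v i) (h i) = ereal (1 - 1 / 2 ^ i) + max (u (i - 1)) (v (i - 1))))"

definition TropLP_sublevel :: "nat \<Rightarrow> real \<Rightarrow> trop_point set" where
  "TropLP_sublevel r lam = {p. TropLP_feasible r p \<and> fst (snd p) 0 \<le> ereal lam}"

definition trop_le :: "nat \<Rightarrow> trop_point \<Rightarrow> trop_point \<Rightarrow> bool" where
  "trop_le r p q = (case p of (u, v, z, z', h) \<Rightarrow> case q of (u2, v2, z2, z2', h2) \<Rightarrow>
     (\<forall>i\<le>r. u i \<le> u2 i \<and> v i \<le> v2 i \<and> z i \<le> z2 i \<and> h i \<le> h2 i) \<and>
     (\<forall>i\<in>{1..r}. z' i \<le> z2' i))"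

definition is_trop_barycenter :: "nat \<Rightarrow> trop_point set \<Rightarrow> trop_point \<Rightarrow> bool" where
  "is_trop_barycenter r S p = (p \<in> S \<and> (\<forall>q\<in>S. trop_le r q p))"

definition G :: "nat \<Rightarrow> real \<times> real \<Rightarrow> real \<times> real" where
  "G i ab = (case ab of (a, b) \<Rightarrow> (1 + min a b, 1 - 1 / 2 ^ i + max a b))"

fun uv :: "real \<Rightarrow> nat \<Rightarrow> real \<times> real" where
  "uv lam 0 = (1, min 2 lam)"
| "uv lam (Suc i) = G (Suc i) (uv lam i)"

definition u_of :: "real \<Rightarrow> nat \<Rightarrow> real" where "u_of lam i = fst (uv lam i)"
definition v_of :: "real \<Rightarrow> nat \<Rightarrow> real" where "v_of lam i = snd (uv lam i)"

definition z_of :: "real \<Rightarrow> nat \<Rightarrow> real" where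
  "z_of lam i = (if i = 0 then 1 else 1 + u_of lam (i - 1))"
definition z'_of :: "real \<Rightarrow> nat \<Rightarrow> real" where
  "z'_of lam i = 1 + v_of lam (i - 1)"
definition h_of :: "real \<Rightarrow> nat \<Rightarrow> real" where
  "h_of lam i = (if i = 0 then 2 else v_of lam i)"

end

theory Submission
  imports Defs
begin

lemma u_Suc: "u_of lam (Suc i) = 1 + min (u_of lam i) (v_of lam i)"
  by (simp add: u_of_def v_of_def G_def split: prod.splits)
lemma v_Suc: "v_of lam (Suc i) = 1 - 1 / 2 ^ Suc i + max (u_of lam i) (v_of lam i)"
  by (simp add: u_of_def v_of_def G_def split: prod.splits)
lemma u0: "u_of lam 0 = 1" by (simp add: u_of_def)
lemma v0: "v_of lam 0 = min 2 lam" by (simp add: v_of_def)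

lemma emono: "(x::ereal) \<le> y \<Longrightarrow> c + x \<le> c + y"
  by (simp add: add_left_mono)

lemma bound:
  assumes F: "TropLP_feasible r (u, v, z, z', h)" and L: "v 0 \<le> ereal lam"
  shows "i \<le> r \<Longrightarrow> u i \<le> ereal (u_of lam i) \<and> v i \<le> ereal (v_of lam i)"
proof (induction i)
  case 0
  have "max (u 0) (z 0) = 1" "max (v 0) (h 0) = 2" using F unfolding TropLP_feasible_def by auto
  then have "u 0 \<le> 1" "v 0 \<le> 2" by (metis max.cobounded1)+
  then show ?case using L by (simp add: u0 v0 one_ereal_def)
next
  case (Suc i)
  then have IH: "u i \<le> ereal (u_of lam i)" "v i \<le> ereal (v_of lam i)" by auto
  have S: "Suc i \<in> {1..r}" using Suc.prems by auto
  have e1: "max (u (Suc i)) (z (Suc i)) = 1 + u i"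
   and e2: "max (u (Suc i)) (z' (Suc i)) = 1 + v i"
   and e3: "max (v (Suc i)) (h (Suc i)) = ereal (1 - 1 / 2 ^ Suc i) + max (u i) (v i)"
    using F S unfolding TropLP_feasible_def by auto
  have "u (Suc i) \<le> 1 + u i" using e1 by (metis max.cobounded1)
  also have "\<dots> \<le> 1 + ereal (u_of lam i)" using IH emono by blast
  finally have a: "u (Suc i) \<le> ereal (1 + u_of lam i)" by (simp add: add.commute)
  have "u (Suc i) \<le> 1 + v i" using e2 by (metis max.cobounded1)
  also have "\<dots> \<le> 1 + ereal (v_of lam i)" using IH emono by blast
  finally have b: "u (Suc i) \<le> ereal (1 + v_of lam i)" by (simp add: add.commute)
  have "v (Suc i) \<le> ereal (1 - 1 / 2 ^ Suc i) + max (u i) (v i)" using e3 by (metis max.cobounded1)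
  also have "\<dots> \<le> ereal (1 - 1 / 2 ^ Suc i) + max (ereal (u_of lam i)) (ereal (v_of lam i))"
    using IH by (intro emono max.mono)
  finally have c: "v (Suc i) \<le> ereal (v_of lam (Suc i))" by (metis ereal_max plus_ereal.simps(1) v_Suc)
  have "u (Suc i) \<le> ereal (u_of lam (Suc i))" using a b by (simp add: u_Suc min_def)
  then show ?case using c by simp
qed

theorem mainTheorem12:
  fixes r :: nat and lam :: real
  assumes "r \<ge> 1"
  shows "is_trop_barycenter r (TropLP_sublevel r lam)
           (\<lambda>i. ereal (u_of lam i), \<lambda>i. ereal (v_of lam i), \<lambda>i. ereal (z_of lam i),
            \<lambda>i. ereal (z'_of lam i), \<lambda>i. ereal (h_of lam i))"
  unfolding is_trop_barycenter_def
proof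
  have a: "\<forall>i\<in>{1..r}. max (ereal (u_of lam i)) (ereal (z_of lam i)) = 1 + ereal (u_of lam (i - 1)) \<and>
      max (ereal (u_of lam i)) (ereal (z'_of lam i)) = 1 + ereal (v_of lam (i - 1)) \<and>
      max (ereal (v_of lam i)) (ereal (h_of lam i)) =
        ereal (1 - 1 / 2 ^ i) + max (ereal (u_of lam (i - 1))) (ereal (v_of lam (i - 1)))"
  proof
    fix i assume i: "i \<in> {1..r}"
    then obtain j where j: "i = Suc j" by (cases i) auto
    have "max (u_of lam i) (z_of lam i) = 1 + u_of lam (i - 1)"
      using j by (simp add: u_Suc z_of_def max_def min_def)
    moreover have "max (u_of lam i) (z'_of lam i) = 1 + v_of lam (i - 1)"
      using j by (simp add: u_Suc z'_of_def max_def min_def)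
    moreover have "max (v_of lam i) (h_of lam i) =
        (1 - 1 / 2 ^ i) + max (u_of lam (i - 1)) (v_of lam (i - 1))"
      using j by (simp add: h_of_def v_Suc)
    ultimately show "max (ereal (u_of lam i)) (ereal (z_of lam i)) = 1 + ereal (u_of lam (i - 1)) \<and>
      max (ereal (u_of lam i)) (ereal (z'_of lam i)) = 1 + ereal (v_of lam (i - 1)) \<and>
      max (ereal (v_of lam i)) (ereal (h_of lam i)) =
        ereal (1 - 1 / 2 ^ i) + max (ereal (u_of lam (i - 1))) (ereal (v_of lam (i - 1)))"
      by (metis ereal_max plus_ereal.simps(1) one_ereal_def)
  qed
  have b: "max (ereal (u_of lam 0)) (ereal (z_of lam 0)) = 1" by (simp add: u0 z_of_def)
  have c: "max (ereal (v_of lam 0)) (ereal (h_of lam 0)) = 2" by (simp add: v0 h_of_def)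
  have d: "ereal (v_of lam 0) \<le> ereal lam" by (simp add: v0)
  show "(\<lambda>i. ereal (u_of lam i), \<lambda>i. ereal (v_of lam i), \<lambda>i. ereal (z_of lam i),
            \<lambda>i. ereal (z'_of lam i), \<lambda>i. ereal (h_of lam i)) \<in> TropLP_sublevel r lam"
    unfolding TropLP_sublevel_def TropLP_feasible_def mem_Collect_eq prod.case fst_conv snd_conv
    using a b c d by simp
next
  show "\<forall>q\<in>TropLP_sublevel r lam. trop_le r q
     (\<lambda>i. ereal (u_of lam i), \<lambda>i. ereal (v_of lam i), \<lambda>i. ereal (z_of lam i),
            \<lambda>i. ereal (z'_of lam i), \<lambda>i. ereal (h_of lam i))"
  proof
    fix q assume q: "q \<in> TropLP_sublevel r lam"
    obtain u v z z' h where qq: "q = (u, v, z, z', h)" by (cases q) auto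
    have F: "TropLP_feasible r (u, v, z, z', h)" and L: "v 0 \<le> ereal lam"
      using q qq unfolding TropLP_sublevel_def by auto
    note B = bound[OF F L]
    have A: "\<forall>i\<le>r. u i \<le> ereal (u_of lam i) \<and> v i \<le> ereal (v_of lam i) \<and>
        z i \<le> ereal (z_of lam i) \<and> h i \<le> ereal (h_of lam i)"
    proof (intro allI impI)
      fix i assume i: "i \<le> r"
      show "u i \<le> ereal (u_of lam i) \<and> v i \<le> ereal (v_of lam i) \<and>
        z i \<le> ereal (z_of lam i) \<and> h i \<le> ereal (h_of lam i)"
      proof (cases i)
        case 0
        have "max (u 0) (z 0) = 1" "max (v 0) (h 0) = 2" using F unfolding TropLP_feasible_def by auto
        then have "z 0 \<le> 1" "h 0 \<le> 2" by (metis max.cobounded2)+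
        then show ?thesis using B i 0 by (simp add: z_of_def h_of_def one_ereal_def)
      next
        case (Suc j)
        have S: "Suc j \<in> {1..r}" using i Suc by auto
        have e1: "max (u (Suc j)) (z (Suc j)) = 1 + u j"
         and e3: "max (v (Suc j)) (h (Suc j)) = ereal (1 - 1 / 2 ^ Suc j) + max (u j) (v j)"
          using F S unfolding TropLP_feasible_def by auto
        have Bj: "u j \<le> ereal (u_of lam j)" "v j \<le> ereal (v_of lam j)" using B i Suc by auto
        have "z (Suc j) \<le> 1 + u j" using e1 by (metis max.cobounded2)
        also have "\<dots> \<le> 1 + ereal (u_of lam j)" using Bj emono by blast
        finally have a: "z (Suc j) \<le> ereal (z_of lam (Suc j))" by (simp add: z_of_def add.commute)
        have "h (Suc j) \<le> ereal (1 - 1 / 2 ^ Suc j) + max (u j) (v j)" using e3 by (metis max.cobounded2)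
        also have "\<dots> \<le> ereal (1 - 1 / 2 ^ Suc j) + max (ereal (u_of lam j)) (ereal (v_of lam j))"
          using Bj by (intro emono max.mono)
        finally have c: "h (Suc j) \<le> ereal (h_of lam (Suc j))" by (metis ereal_max plus_ereal.simps(1) v_Suc h_of_def nat.distinct(1))
        show ?thesis using a c B i Suc by simp
      qed
    qed
    have Z: "\<forall>i\<in>{1..r}. z' i \<le> ereal (z'_of lam i)"
    proof
      fix i assume i: "i \<in> {1..r}"
      have e2: "max (u i) (z' i) = 1 + v (i - 1)" using F i unfolding TropLP_feasible_def by auto
      have c1: "z' i \<le> 1 + v (i - 1)" using e2 by (metis max.cobounded2)
      have "v (i - 1) \<le> ereal (v_of lam (i - 1))" using B i by auto
      then have "1 + v (i - 1) \<le> 1 + ereal (v_of lam (i - 1))" by (rule emono)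
      with c1 have "z' i \<le> 1 + ereal (v_of lam (i - 1))" by (rule order_trans)
      then show "z' i \<le> ereal (z'_of lam i)" by (simp add: z'_of_def add.commute)
    qed
    show "trop_le r q (\<lambda>i. ereal (u_of lam i), \<lambda>i. ereal (v_of lam i), \<lambda>i. ereal (z_of lam i),
            \<lambda>i. ereal (z'_of lam i), \<lambda>i. ereal (h_of lam i))"
      unfolding qq trop_le_def using A Z by simp
  qed
qed

end
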